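(* Let $d\ge1$, $\alpha\in\mathbb{N}$, let $H=(V,E)$ be a $d$-hypergraph with maximum degree $\Delta$ and let $w\colon E\to\mathbb{Z}$. Suppose that $H$ has no isolated vertex (every vertex lies in some edge), that $w(e)\neq0$ for every $e\in E$, and that $|V|\ge 2\alpha\, d^3\Delta^2$. Then there is a set $X\subseteq V$ with $|w[X]|\ge\alpha$.
   Context: A $d$-hypergraph $H=(V,E)$ has a vertex set $V$ and a set $E$ of edges, each $e\subseteq V$ with $|e|\le d$ (the empty set may be an edge). The degree of a vertex is the number of edges containing it; $\Delta$ is the maximum degree. For $X\subseteq V$, $E[X]=\{e\in E: e\subseteq X\}$ and $w[X]=\sum_{e\in E[X]}w(e)$. *)

theory Defs
  imports Main
begin

definition hypergraph :: "nat \<Rightarrow> 'a set \<Rightarrow> 'a set set \<Rightarrow> bool" where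
  "hypergraph d V E \<longleftrightarrow> finite V \<and> (\<forall>e\<in>E. e \<subseteq> V \<and> card e \<le> d)"

definition vdegree :: "'a set set \<Rightarrow> 'a \<Rightarrow> nat" where
  "vdegree E v = card {e \<in> E. v \<in> e}"

definition max_degree :: "'a set \<Rightarrow> 'a set set \<Rightarrow> nat" where
  "max_degree V E = Max ((vdegree E) ` V)"

definition wsum :: "'a set set \<Rightarrow> ('a set \<Rightarrow> int) \<Rightarrow> 'a set \<Rightarrow> int" where
  "wsum E w X = (\<Sum>e\<in>{e \<in> E. e \<subseteq> X}. w e)"

end

theory Submission
  imports Defs
begin

definition nb :: "'a set set \<Rightarrow> 'a set \<Rightarrow> 'a set" where
  "nb E A = \<Union>{g\<in>E. g \<inter> A \<noteq> {}}"

definition good :: "'a set set \<Rightarrow> 'a set set \<Rightarrow> bool" where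
  "good E S \<longleftrightarrow> S \<subseteq> E \<and> (\<forall>e\<in>S. e \<noteq> {} \<and> (\<forall>f\<in>E. f \<noteq> {} \<longrightarrow> f \<subseteq> e \<longrightarrow> f = e))
     \<and> (\<forall>e1\<in>S. \<forall>e2\<in>S. e1 \<noteq> e2 \<longrightarrow> (\<forall>g\<in>E. g \<inter> e1 = {} \<or> g \<inter> e2 = {}))"

lemma goodD:
  "good E S \<Longrightarrow> S \<subseteq> E"
  "good E S \<Longrightarrow> e \<in> S \<Longrightarrow> e \<noteq> {}"
  "good E S \<Longrightarrow> e \<in> S \<Longrightarrow> f \<in> E \<Longrightarrow> f \<noteq> {} \<Longrightarrow> f \<subseteq> e \<Longrightarrow> f = e"
  "good E S \<Longrightarrow> e1 \<in> S \<Longrightarrow> e2 \<in> S \<Longrightarrow> e1 \<noteq> e2 \<Longrightarrow> g \<in> E \<Longrightarrow> g \<inter> e1 = {} \<or> g \<inter> e2 = {}"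
  unfolding good_def by blast+

lemma hg_finE: "hypergraph d V E \<Longrightarrow> finite E"
  unfolding hypergraph_def by (meson PowI finite_Pow_iff rev_finite_subset subsetI)

lemma nb_sub: "hypergraph d V E \<Longrightarrow> nb E A \<subseteq> V"
  unfolding hypergraph_def nb_def by blast

lemma nb_card:
  assumes h: "hypergraph d V E" and A: "A \<subseteq> V"
  shows "card (nb E A) \<le> card A * (max_degree V E * d)"
proof -
  have fV: "finite V" using h unfolding hypergraph_def by simp
  have fA: "finite A" using A fV finite_subset by blast
  have eq: "nb E A = (\<Union>x\<in>A. \<Union>{g\<in>E. x \<in> g})" unfolding nb_def by blast
  have "card (nb E A) \<le> (\<Sum>x\<in>A. card (\<Union>{g\<in>E. x \<in> g}))"
    unfolding eq by (rule card_UN_le[OF fA])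
  also have "\<dots> \<le> (\<Sum>x\<in>A. max_degree V E * d)"
  proof (rule sum_mono)
    fix x assume xA: "x \<in> A"
    have "card (\<Union>{g\<in>E. x \<in> g}) \<le> sum card {g\<in>E. x \<in> g}"
      by (rule card_Union_le_sum_card)
    also have "\<dots> \<le> card {g\<in>E. x \<in> g} * d"
      using sum_bounded_above[of "{g\<in>E. x \<in> g}" card d] h unfolding hypergraph_def by auto
    also have "card {g\<in>E. x \<in> g} \<le> max_degree V E"
      unfolding max_degree_def vdegree_def[symmetric]
      using fV xA A by (intro Max_ge) auto
    hence "card {g\<in>E. x \<in> g} * d \<le> max_degree V E * d" by simp
    finally show "card (\<Union>{g\<in>E. x \<in> g}) \<le> max_degree V E * d" .
  qed
  also have "\<dots> = card A * (max_degree V E * d)" by simp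
  finally show ?thesis .
qed

lemma build:
  assumes h: "hypergraph d V E" and cov: "\<forall>v\<in>V. \<exists>e\<in>E. v \<in> e" and ne: "V \<noteq> {}"
  shows "k * (d * (max_degree V E * d) * (max_degree V E * d)) \<le> card V \<Longrightarrow> \<exists>S. good E S \<and> card S = k"
proof (induction k)
  case 0
  show ?case by (rule exI[of _ "{}"]) (simp add: good_def)
next
  case (Suc k)
  let ?D = "d * (max_degree V E * d) * (max_degree V E * d)"
  have fV: "finite V" using h unfolding hypergraph_def by simp
  have fE: "finite E" using hg_finE[OF h] .
  from Suc obtain S where gS: "good E S" and cS: "card S = k" by auto
  have SE: "S \<subseteq> E" using goodD(1)[OF gS] .
  have fS: "finite S" using SE fE finite_subset by blast
  have US: "\<Union>S \<subseteq> V" using SE h unfolding hypergraph_def by blast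
  have cU: "card (\<Union>S) \<le> k * d"
  proof -
    have "card (\<Union>S) \<le> sum card S" by (rule card_Union_le_sum_card)
    also have "\<dots> \<le> card S * d"
      using sum_bounded_above[of S card d] SE h unfolding hypergraph_def by auto
    finally show ?thesis using cS by simp
  qed
  have "card (nb E (nb E (\<Union>S))) \<le> card (nb E (\<Union>S)) * (max_degree V E * d)"
    by (rule nb_card[OF h nb_sub[OF h]])
  also have "\<dots> \<le> (card (\<Union>S) * (max_degree V E * d)) * (max_degree V E * d)"
    using nb_card[OF h US] by simp
  also have "\<dots> \<le> (k * d * (max_degree V E * d)) * (max_degree V E * d)"
    using cU by (intro mult_le_mono1) simp
  also have "\<dots> = k * ?D" by (simp add: ac_simps)
  finally have cB: "card (nb E (nb E (\<Union>S))) \<le> k * ?D" .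
  have "k * ?D < card V"
  proof (cases "?D = 0")
    case True
    have "card V > 0" using ne fV by (simp add: card_gt_0_iff)
    moreover have "k * ?D = 0" using True by (simp only: mult_0_right)
    ultimately show ?thesis by linarith
  next
    case False
    hence "0 < ?D" by (simp only: neq0_conv)
    moreover have "?D + k * ?D \<le> card V" using Suc.prems by (simp only: mult_Suc)
    ultimately show ?thesis by linarith
  qed
  hence lt: "card (nb E (nb E (\<Union>S))) < card V" using cB by linarith
  have "\<not> V \<subseteq> nb E (nb E (\<Union>S))"
  proof
    assume "V \<subseteq> nb E (nb E (\<Union>S))"
    hence "card V \<le> card (nb E (nb E (\<Union>S)))"
      by (rule card_mono[OF finite_subset[OF nb_sub[OF h] fV]])
    thus False using lt by linarith
  qed
  then obtain v where vV: "v \<in> V" and vB: "v \<notin> nb E (nb E (\<Union>S))" by blast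
  obtain f where fE': "f \<in> E" and vf: "v \<in> f" using cov vV by blast
  let ?M = "{f'\<in>E. f' \<noteq> {} \<and> f' \<subseteq> f}"
  have "finite ?M" using fE by simp
  moreover have "?M \<noteq> {}" using fE' vf by blast
  ultimately have "\<exists>m\<in>?M. \<forall>b\<in>?M. b \<le> m \<longrightarrow> m = b" by (rule finite_has_minimal)
  then obtain e where eM: "e \<in> ?M" and emin: "\<forall>b\<in>?M. b \<le> e \<longrightarrow> e = b"
    by (erule bexE)
  have eE: "e \<in> E" and ene: "e \<noteq> {}" and ef: "e \<subseteq> f" using eM by auto
  have emin': "\<forall>g\<in>E. g \<noteq> {} \<longrightarrow> g \<subseteq> e \<longrightarrow> g = e"
  proof (intro ballI impI)
    fix g assume "g \<in> E" "g \<noteq> {}" "g \<subseteq> e"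
    hence "g \<in> ?M" using ef by blast
    thus "g = e" using emin \<open>g \<subseteq> e\<close> by (metis order_refl)
  qed
  have sep: "\<forall>g\<in>E. g \<inter> e = {} \<or> g \<inter> \<Union>S = {}"
  proof (intro ballI, rule ccontr)
    fix g assume gE: "g \<in> E" and "\<not> (g \<inter> e = {} \<or> g \<inter> \<Union>S = {})"
    then have ge: "g \<inter> e \<noteq> {}" and gS: "g \<inter> \<Union>S \<noteq> {}" by auto
    have "g \<subseteq> nb E (\<Union>S)" using gE gS unfolding nb_def by blast
    hence "f \<inter> nb E (\<Union>S) \<noteq> {}" using ge ef by blast
    hence "v \<in> nb E (nb E (\<Union>S))" using fE' vf unfolding nb_def by blast
    thus False using vB by simp
  qed
  have eS: "e \<notin> S"
  proof
    assume "e \<in> S"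
    hence "e \<inter> \<Union>S \<noteq> {}" using ene by blast
    thus False using sep eE ene by blast
  qed
  have "good E (insert e S)"
    unfolding good_def
  proof (intro conjI ballI impI)
    show "insert e S \<subseteq> E" using SE eE by simp
  next
    fix x assume "x \<in> insert e S"
    thus "x \<noteq> {}" using ene goodD(2)[OF gS] by (cases "x = e") auto
  next
    fix x f assume "x \<in> insert e S" "f \<in> E" "f \<noteq> {}" "f \<subseteq> x"
    thus "f = x" using emin' goodD(3)[OF gS] by (cases "x = e") auto
  next
    fix e1 e2 g assume e1: "e1 \<in> insert e S" and e2: "e2 \<in> insert e S" and ne: "e1 \<noteq> e2" and gE: "g \<in> E"
    show "g \<inter> e1 = {} \<or> g \<inter> e2 = {}"
    proof (cases "e1 = e")
      case True
      hence "e2 \<in> S" using e2 ne by simp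
      thus ?thesis using sep gE True by blast
    next
      case False
      hence e1S: "e1 \<in> S" using e1 by simp
      show ?thesis
      proof (cases "e2 = e")
        case True thus ?thesis using sep gE e1S by blast
      next
        case False
        hence "e2 \<in> S" using e2 by simp
        thus ?thesis using goodD(4)[OF gS e1S _ ne gE] by blast
      qed
    qed
  qed
  moreover have "card (insert e S) = Suc k" using eS fS cS by simp
  ultimately show ?case by blast
qed

lemma wsum_union:
  assumes h: "hypergraph d V E" and g: "good E S" and T: "T \<subseteq> S"
  shows "wsum E w (\<Union>T) = (if {} \<in> E then w {} else 0) + sum w T"
proof -
  have fE: "finite E" using hg_finE[OF h] .
  have SE: "S \<subseteq> E" using goodD(1)[OF g] .
  have eq: "{e \<in> E. e \<subseteq> \<Union>T} = T \<union> {e\<in>E. e = {}}"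
  proof
    show "T \<union> {e\<in>E. e = {}} \<subseteq> {e \<in> E. e \<subseteq> \<Union>T}" using T SE by blast
  next
    show "{e \<in> E. e \<subseteq> \<Union>T} \<subseteq> T \<union> {e\<in>E. e = {}}"
    proof
      fix e assume "e \<in> {e \<in> E. e \<subseteq> \<Union>T}"
      hence eE: "e \<in> E" and eT: "e \<subseteq> \<Union>T" by auto
      show "e \<in> T \<union> {e\<in>E. e = {}}"
      proof (cases "e = {}")
        case True thus ?thesis using eE by simp
      next
        case False
        then obtain x where xe: "x \<in> e" by blast
        then obtain t where tT: "t \<in> T" and xt: "x \<in> t" using eT by blast
        have "e \<subseteq> t"
        proof
          fix y assume ye: "y \<in> e"
          then obtain t' where t'T: "t' \<in> T" and yt': "y \<in> t'" using eT by blast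
          have "t' = t"
          proof (rule ccontr)
            assume "t' \<noteq> t"
            hence "e \<inter> t' = {} \<or> e \<inter> t = {}" using goodD(4)[OF g _ _ _ eE] T tT t'T by blast
            thus False using ye yt' xe xt by blast
          qed
          thus "y \<in> t" using yt' by simp
        qed
        hence "e = t" using goodD(3)[OF g _ eE False] T tT by blast
        thus ?thesis using tT by simp
      qed
    qed
  qed
  have fT: "finite T" using T SE fE by (meson finite_subset)
  have dis: "T \<inter> {e\<in>E. e = {}} = {}" using goodD(2)[OF g] T by blast
  have "wsum E w (\<Union>T) = sum w T + sum w {e\<in>E. e = {}}"
    unfolding wsum_def eq by (rule sum.union_disjoint[OF fT _ dis]) (use fE in simp)
  moreover have "sum w {e\<in>E. e = {}} = (if {} \<in> E then w {} else 0)"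
  proof (cases "{} \<in> E")
    case True
    hence "{e\<in>E. e = {}} = {{}}" by blast
    thus ?thesis using True by simp
  next
    case False
    hence em: "{e\<in>E. e = {}} = {}" by blast
    show ?thesis by (subst em) (simp add: False)
  qed
  ultimately show ?thesis by simp
qed

theorem lemma9:
  fixes d \<alpha> :: nat and V :: "'a set" and E :: "'a set set" and w :: "'a set \<Rightarrow> int"
  assumes "d \<ge> 1"
    and "hypergraph d V E"
    and "V \<noteq> {}"
    and "\<forall>v\<in>V. \<exists>e\<in>E. v \<in> e"
    and "\<forall>e\<in>E. w e \<noteq> 0"
    and "card V \<ge> 2 * \<alpha> * d ^ 3 * (max_degree V E) ^ 2"
  shows "\<exists>X \<subseteq> V. \<bar>wsum E w X\<bar> \<ge> int \<alpha>"
proof -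
  have "(2 * \<alpha>) * (d * (max_degree V E * d) * (max_degree V E * d)) = 2 * \<alpha> * d ^ 3 * (max_degree V E) ^ 2"
    by (simp add: power2_eq_square power3_eq_cube ac_simps)
  note eq = this
  have le: "(2 * \<alpha>) * (d * (max_degree V E * d) * (max_degree V E * d)) \<le> card V"
    by (subst eq) (rule assms(6))
  obtain S where gS: "good E S" and cS: "card S = 2 * \<alpha>"
    using build[OF assms(2) assms(4) assms(3) le] by auto
  have fE: "finite E" using hg_finE[OF assms(2)] .
  have SE: "S \<subseteq> E" using goodD(1)[OF gS] .
  have fS: "finite S" using SE fE finite_subset by blast
  define c where "c = (if {} \<in> E then w {} else 0)"
  define P where "P = {e\<in>S. w e > 0}"
  define N where "N = {e\<in>S. w e < 0}"
  have PS: "P \<subseteq> S" and NS: "N \<subseteq> S" unfolding P_def N_def by auto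
  have fP: "finite P" and fN: "finite N" using PS NS fS finite_subset by blast+
  have wne: "\<forall>e\<in>S. w e \<noteq> 0" using assms(5) SE by blast
  have PN1: "P \<union> N = S"
  proof
    show "P \<union> N \<subseteq> S" using PS NS by blast
  next
    show "S \<subseteq> P \<union> N"
    proof
      fix x assume xS: "x \<in> S"
      hence "w x \<noteq> 0" using wne by blast
      hence "w x > 0 \<or> w x < 0" by arith
      thus "x \<in> P \<union> N" using xS unfolding P_def N_def by blast
    qed
  qed
  have PN2: "P \<inter> N = {}" unfolding P_def N_def by auto
  note PN = PN1 PN2
  have cPN: "card P + card N = 2 * \<alpha>" using card_Un_disjoint[OF fP fN PN(2)] PN(1) cS by simp
  have sP: "sum w P \<ge> int (card P)"
    using sum_mono[of P "\<lambda>_. (1::int)" w] unfolding P_def by auto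
  have sN: "sum w N \<le> - int (card N)"
    using sum_mono[of N w "\<lambda>_. (-1::int)"] unfolding N_def by auto
  have XP: "\<Union>P \<subseteq> V" and XN: "\<Union>N \<subseteq> V"
    using PS NS SE assms(2) unfolding hypergraph_def by blast+
  have wP: "wsum E w (\<Union>P) = c + sum w P" using wsum_union[OF assms(2) gS PS] c_def by simp
  have wN: "wsum E w (\<Union>N) = c + sum w N" using wsum_union[OF assms(2) gS NS] c_def by simp
  show ?thesis
  proof (cases "\<bar>c + sum w P\<bar> \<ge> int \<alpha>")
    case True thus ?thesis using XP wP by auto
  next
    case False
    hence "\<bar>c + sum w N\<bar> \<ge> int \<alpha>" using sP sN cPN by linarith
    thus ?thesis using XN wN by auto
  qed
qed

end
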